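(* Let $\mathcal{F}$ be a scaling-closed set of length spaces or $\mathbb{R}_{>0}$-weighted graphs. 1. If $f,g:\mathbb{N}\times\mathbb{R}\to\mathbb{R}$ are functions such that every member of $\mathcal{F}$ has the weak coarse Menger property with witness $(f(k,r),g(k,r))$, then every length space in $\mathcal{F}$ has the weak coarse Menger property with witness $(f(k,1),g(k,1)\cdot r)$. 2. If $f,g:\mathbb{N}\times\mathbb{R}\to\mathbb{R}$ are functions such that every member of $\mathcal{F}$ has the weak coarse Gallai property with witness $(f(k,r),g(k,r))$, then every length space in $\mathcal{F}$ has the weak coarse Gallai property with witness $(f(k,1),g(k,1)\cdot r)$. 3. If $f,g:\mathbb{N}\times\mathbb{R}_{>0}\times\mathbb{R}_{\ge0}\to\mathbb{R}$ are functions such that every member of $\mathcal{F}$ has the remote weak coarse Menger property with witness $(f(k,r,\ell),g(k,r,\ell))$, then every length space in $\mathcal{F}$ has the remote weak coarse Menger property with witness $(f(k,1,\frac{\ell}{r}),\,g(k,1,\frac{\ell}{r})\cdot r)$.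
   Context: A set $\mathcal{F}$ of metric spaces is scaling-closed if $(X,r\cdot d_X)\in\mathcal{F}$ for every $(X,d_X)\in\mathcal{F}$ and real $r>0$. A length space is a metric space in which any two points are joined by paths (rectifiable curves) of length arbitrarily close to their distance. An $\mathbb{R}_{>0}$-weighted graph is a graph with positive edge weights, viewed as the metric space on its vertices with distance the infimum total weight of a path; its paths are graph paths. A set is $(\alpha,\beta)$-centered if it lies in a union of at most $\alpha$ balls of radius at most $\beta$; distance between paths is the infimum of distances between their points. Paths from $A$ to $B$ start in $A$ and end in $B$; an $(\ell,A,B)$-path is a path from $a\in A$ to $b\in B$ with $d(a,b)\ge\ell$; an $A$-path joins two distinct points of $A$. A space has the weak coarse Menger property with witness $(f,g)$ if for all $k\in\mathbb{N}$, $r>0$, subsets $A,B$, either there are $k$ paths from $A$ to $B$ pairwise at distance at least $r$, or some $(f(k,r),g(k,r))$-centered set meets every path from $A$ to $B$; the weak coarse Gallai property with witness $(f,g)$ is the same with $A$-paths; the remote weak coarse Menger property with witness $(f,g)$ means for all $k$, $r>0$, $\ell\ge0$, $A,B$, either there are $k$ $(\ell,A,B)$-paths pairwise at distance at least $r$ or some $(f(k,r,\ell),g(k,r,\ell))$-centered set meets every $(\ell,A,B)$-path. *)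

theory Defs
  imports "HOL-Analysis.Analysis"
begin

definition partition_sums :: "('a \<Rightarrow> 'a \<Rightarrow> real) \<Rightarrow> (real \<Rightarrow> 'a) \<Rightarrow> real set" where
  "partition_sums d \<gamma> = {(\<Sum>i<n. d (\<gamma> (t i)) (\<gamma> (t (Suc i)))) | n t.
      t 0 = 0 \<and> t n = 1 \<and> (\<forall>i<n. t i \<le> t (Suc i))}"

definition curve_length :: "('a \<Rightarrow> 'a \<Rightarrow> real) \<Rightarrow> (real \<Rightarrow> 'a) \<Rightarrow> real" where
  "curve_length d \<gamma> = Sup (partition_sums d \<gamma>)"

definition rect_curve :: "'a set \<Rightarrow> ('a \<Rightarrow> 'a \<Rightarrow> real) \<Rightarrow> (real \<Rightarrow> 'a) \<Rightarrow> bool" where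
  "rect_curve X d \<gamma> \<longleftrightarrow>
     continuous_map (top_of_set {0..1}) (Metric_space.mtopology X d) \<gamma> \<and>
     bdd_above (partition_sums d \<gamma>)"

definition length_space :: "'a set \<Rightarrow> ('a \<Rightarrow> 'a \<Rightarrow> real) \<Rightarrow> bool" where
  "length_space X d \<longleftrightarrow> Metric_space X d \<and>
     (\<forall>x\<in>X. \<forall>y\<in>X. \<forall>\<epsilon>>0. \<exists>\<gamma>. rect_curve X d \<gamma> \<and> \<gamma> 0 = x \<and> \<gamma> 1 = y \<and>
        curve_length d \<gamma> \<le> d x y + \<epsilon>)"

definition gpath :: "'a set \<Rightarrow> 'a set set \<Rightarrow> 'a list \<Rightarrow> bool" where
  "gpath V E xs \<longleftrightarrow> xs \<noteq> [] \<and> distinct xs \<and> set xs \<subseteq> V \<and>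
     (\<forall>i. Suc i < length xs \<longrightarrow> {xs ! i, xs ! Suc i} \<in> E)"

definition path_weight :: "('a set \<Rightarrow> real) \<Rightarrow> 'a list \<Rightarrow> real" where
  "path_weight w xs = (\<Sum>i<length xs - 1. w {xs ! i, xs ! Suc i})"

definition gdist :: "'a set \<Rightarrow> 'a set set \<Rightarrow> ('a set \<Rightarrow> real) \<Rightarrow> 'a \<Rightarrow> 'a \<Rightarrow> real" where
  "gdist V E w x y = Inf {path_weight w xs | xs. gpath V E xs \<and> hd xs = x \<and> last xs = y}"

definition weighted_graph :: "'a set \<Rightarrow> 'a set set \<Rightarrow> ('a set \<Rightarrow> real) \<Rightarrow> bool" where
  "weighted_graph V E w \<longleftrightarrow>
     E \<subseteq> {{a, b} | a b. a \<in> V \<and> b \<in> V \<and> a \<noteq> b} \<and>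
     (\<forall>e\<in>E. w e > 0) \<and>
     (\<forall>x\<in>V. \<forall>y\<in>V. \<exists>xs. gpath V E xs \<and> hd xs = x \<and> last xs = y) \<and>
     Metric_space V (gdist V E w)"

datatype 'a space =
    LenSp "'a set" "'a \<Rightarrow> 'a \<Rightarrow> real"
  | WGraph "'a set" "'a set set" "'a set \<Rightarrow> real"

fun valid_space :: "'a space \<Rightarrow> bool" where
  "valid_space (LenSp X d) = length_space X d"
| "valid_space (WGraph V E w) = weighted_graph V E w"

fun spc :: "'a space \<Rightarrow> 'a set" where
  "spc (LenSp X d) = X"
| "spc (WGraph V E w) = V"

fun sdist :: "'a space \<Rightarrow> 'a \<Rightarrow> 'a \<Rightarrow> real" where
  "sdist (LenSp X d) = d"
| "sdist (WGraph V E w) = gdist V E w"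

text \<open>Paths, recorded as (start point, end point, set of points on the path).\<close>
fun spaths :: "'a space \<Rightarrow> ('a \<times> 'a \<times> 'a set) set" where
  "spaths (LenSp X d) = {(\<gamma> 0, \<gamma> 1, \<gamma> ` {0..1}) | \<gamma>. rect_curve X d \<gamma>}"
| "spaths (WGraph V E w) = {(hd xs, last xs, set xs) | xs. gpath V E xs}"

fun scale :: "real \<Rightarrow> 'a space \<Rightarrow> 'a space" where
  "scale r (LenSp X d) = LenSp X (\<lambda>x y. r * d x y)"
| "scale r (WGraph V E w) = WGraph V E (\<lambda>e. r * w e)"

definition scaling_closed :: "'a space set \<Rightarrow> bool" where
  "scaling_closed F \<longleftrightarrow> (\<forall>M\<in>F. \<forall>r>0. scale r M \<in> F)"

definition centered :: "'a space \<Rightarrow> real \<Rightarrow> real \<Rightarrow> 'a set \<Rightarrow> bool" where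
  "centered M \<alpha> \<beta> S \<longleftrightarrow> (\<exists>C \<rho>. finite C \<and> C \<subseteq> spc M \<and> real (card C) \<le> \<alpha> \<and>
      (\<forall>c\<in>C. \<rho> c \<le> \<beta>) \<and> S \<subseteq> (\<Union>c\<in>C. {y \<in> spc M. sdist M c y \<le> \<rho> c}))"

definition path_dist :: "'a space \<Rightarrow> 'a set \<Rightarrow> 'a set \<Rightarrow> real" where
  "path_dist M P Q = Inf {sdist M x y | x y. x \<in> P \<and> y \<in> Q}"

definition far_paths :: "'a space \<Rightarrow> ('a \<times> 'a \<times> 'a set \<Rightarrow> bool) \<Rightarrow> nat \<Rightarrow> real \<Rightarrow> bool" where
  "far_paths M Q k r \<longleftrightarrow> (\<exists>P :: nat \<Rightarrow> 'a \<times> 'a \<times> 'a set.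
      (\<forall>i<k. P i \<in> spaths M \<and> Q (P i)) \<and>
      (\<forall>i<k. \<forall>j<k. i \<noteq> j \<longrightarrow> path_dist M (snd (snd (P i))) (snd (snd (P j))) \<ge> r))"

definition hitting_set :: "'a space \<Rightarrow> ('a \<times> 'a \<times> 'a set \<Rightarrow> bool) \<Rightarrow> real \<Rightarrow> real \<Rightarrow> bool" where
  "hitting_set M Q \<alpha> \<beta> \<longleftrightarrow> (\<exists>S \<subseteq> spc M. centered M \<alpha> \<beta> S \<and>
      (\<forall>p\<in>spaths M. Q p \<longrightarrow> S \<inter> snd (snd p) \<noteq> {}))"

definition path_from_to :: "'a set \<Rightarrow> 'a set \<Rightarrow> 'a \<times> 'a \<times> 'a set \<Rightarrow> bool" where
  "path_from_to A B p \<longleftrightarrow> fst p \<in> A \<and> fst (snd p) \<in> B"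

definition A_path :: "'a set \<Rightarrow> 'a \<times> 'a \<times> 'a set \<Rightarrow> bool" where
  "A_path A p \<longleftrightarrow> fst p \<in> A \<and> fst (snd p) \<in> A \<and> fst p \<noteq> fst (snd p)"

definition remote_path :: "'a space \<Rightarrow> real \<Rightarrow> 'a set \<Rightarrow> 'a set \<Rightarrow> 'a \<times> 'a \<times> 'a set \<Rightarrow> bool" where
  "remote_path M l A B p \<longleftrightarrow> fst p \<in> A \<and> fst (snd p) \<in> B \<and> sdist M (fst p) (fst (snd p)) \<ge> l"

definition weak_coarse_menger :: "'a space \<Rightarrow> (nat \<Rightarrow> real \<Rightarrow> real) \<Rightarrow> (nat \<Rightarrow> real \<Rightarrow> real) \<Rightarrow> bool" where
  "weak_coarse_menger M f g \<longleftrightarrow> (\<forall>k r A B. r > 0 \<longrightarrow> A \<subseteq> spc M \<longrightarrow> B \<subseteq> spc M \<longrightarrow>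
      far_paths M (path_from_to A B) k r \<or> hitting_set M (path_from_to A B) (f k r) (g k r))"

definition weak_coarse_gallai :: "'a space \<Rightarrow> (nat \<Rightarrow> real \<Rightarrow> real) \<Rightarrow> (nat \<Rightarrow> real \<Rightarrow> real) \<Rightarrow> bool" where
  "weak_coarse_gallai M f g \<longleftrightarrow> (\<forall>k r A. r > 0 \<longrightarrow> A \<subseteq> spc M \<longrightarrow>
      far_paths M (A_path A) k r \<or> hitting_set M (A_path A) (f k r) (g k r))"

definition remote_weak_coarse_menger :: "'a space \<Rightarrow> (nat \<Rightarrow> real \<Rightarrow> real \<Rightarrow> real) \<Rightarrow> (nat \<Rightarrow> real \<Rightarrow> real \<Rightarrow> real) \<Rightarrow> bool" where
  "remote_weak_coarse_menger M f g \<longleftrightarrow> (\<forall>k r l A B. r > 0 \<longrightarrow> l \<ge> 0 \<longrightarrow> A \<subseteq> spc M \<longrightarrow> B \<subseteq> spc M \<longrightarrow>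
      far_paths M (remote_path M l A B) k r \<or> hitting_set M (remote_path M l A B) (f k r l) (g k r l))"

end

theory Submission imports Defs begin

lemma ms_scale: assumes "Metric_space X d" "c > (0::real)" shows "Metric_space X (\<lambda>x y. c * d x y)"
  using assms unfolding Metric_space_def
  by (auto simp: mult.commute) (metis distrib_left mult_left_mono less_imp_le)

lemma mtop_scale: assumes "Metric_space X d" "c > (0::real)"
  shows "Metric_space.mtopology X (\<lambda>x y. c * d x y) = Metric_space.mtopology X d"
proof -
  interpret A: Metric_space X d by fact
  interpret B: Metric_space X "\<lambda>x y. c * d x y" by (rule ms_scale[OF assms])
  have mb: "B.mball x e = A.mball x (e / c)" for x e
    using assms(2) by (auto simp: A.mball_def B.mball_def field_simps mult.commute)
  show ?thesis
  proof (rule topology_eq[THEN iffD2], intro allI)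
    fix U
    show "openin B.mtopology U = openin A.mtopology U"
      unfolding A.openin_mtopology B.openin_mtopology mb
    proof (intro iffI conjI allI impI; (elim conjE)?)
      fix x assume "U \<subseteq> X" "\<forall>x. x \<in> U \<longrightarrow> (\<exists>r>0. A.mball x (r / c) \<subseteq> U)" "x \<in> U"
      then obtain r where "r>0" "A.mball x (r / c) \<subseteq> U" by blast
      then show "\<exists>r>0. A.mball x r \<subseteq> U" using assms(2) by (intro exI[of _ "r/c"]) auto
    next
      fix x assume "U \<subseteq> X" "\<forall>x. x \<in> U \<longrightarrow> (\<exists>r>0. A.mball x r \<subseteq> U)" "x \<in> U"
      then obtain r where "r>0" "A.mball x r \<subseteq> U" by blast
      then show "\<exists>r>0. A.mball x (r / c) \<subseteq> U" using assms(2) by (intro exI[of _ "r*c"]) auto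
    qed auto
  qed
qed

lemma psums_scale: "partition_sums (\<lambda>x y. c * d x y) \<gamma> = (\<lambda>s. c * s) ` partition_sums d \<gamma>"
  unfolding partition_sums_def
proof (intro equalityI subsetI)
  fix s assume "s \<in> {\<Sum>i<n. c * d (\<gamma> (t i)) (\<gamma> (t (Suc i))) |n t. t 0 = 0 \<and> t n = 1 \<and> (\<forall>i<n. t i \<le> t (Suc i))}"
  then obtain n t where "s = (\<Sum>i<n. c * d (\<gamma> (t i)) (\<gamma> (t (Suc i))))" "t 0 = 0 \<and> t n = 1 \<and> (\<forall>i<n. t i \<le> t (Suc i))" by blast
  then show "s \<in> (\<lambda>s. c * s) ` {\<Sum>i<n. d (\<gamma> (t i)) (\<gamma> (t (Suc i))) |n t. t 0 = 0 \<and> t n = 1 \<and> (\<forall>i<n. t i \<le> t (Suc i))}"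
    by (intro image_eqI[of _ _ "\<Sum>i<n. d (\<gamma> (t i)) (\<gamma> (t (Suc i)))"]) (auto simp: sum_distrib_left)
next
  fix s assume "s \<in> (\<lambda>s. c * s) ` {\<Sum>i<n. d (\<gamma> (t i)) (\<gamma> (t (Suc i))) |n t. t 0 = 0 \<and> t n = 1 \<and> (\<forall>i<n. t i \<le> t (Suc i))}"
  then obtain n t where "s = c * (\<Sum>i<n. d (\<gamma> (t i)) (\<gamma> (t (Suc i))))" "t 0 = 0 \<and> t n = 1 \<and> (\<forall>i<n. t i \<le> t (Suc i))" by blast
  then show "s \<in> {\<Sum>i<n. c * d (\<gamma> (t i)) (\<gamma> (t (Suc i))) |n t. t 0 = 0 \<and> t n = 1 \<and> (\<forall>i<n. t i \<le> t (Suc i))}"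
    by (auto simp: sum_distrib_left)
qed

lemma bdd_scale: assumes "c > (0::real)"
  shows "bdd_above ((\<lambda>s. c * s) ` S) \<longleftrightarrow> bdd_above S"
proof
  assume "bdd_above ((\<lambda>s. c * s) ` S)"
  then obtain b where "\<forall>s\<in>S. c * s \<le> b" by (auto simp: bdd_above_def)
  then have "\<forall>s\<in>S. s \<le> b / c" using assms by (auto simp: field_simps mult.commute)
  then show "bdd_above S" by (auto simp: bdd_above_def)
next
  assume "bdd_above S"
  then obtain b where "\<forall>s\<in>S. s \<le> b" by (auto simp: bdd_above_def)
  then have "\<forall>s\<in>S. c * s \<le> c * b" using assms by auto
  then show "bdd_above ((\<lambda>s. c * s) ` S)" by (auto simp: bdd_above_def)
qed

lemma rect_scale: assumes "Metric_space X d" "c > (0::real)"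
  shows "rect_curve X (\<lambda>x y. c * d x y) \<gamma> = rect_curve X d \<gamma>"
  unfolding rect_curve_def mtop_scale[OF assms] psums_scale bdd_scale[OF assms(2)] ..

lemma spaths_scale: assumes "Metric_space X d" "c > (0::real)"
  shows "spaths (LenSp X (\<lambda>x y. c * d x y)) = spaths (LenSp X d)"
  using rect_scale[OF assms] by simp

lemma spaths_ne: "p \<in> spaths (LenSp X d) \<Longrightarrow> snd (snd p) \<noteq> {}"
  by auto

lemma pd_ge: assumes "Metric_space X d" "P \<noteq> {}" "Q \<noteq> {}" "P \<subseteq> X" "Q \<subseteq> X"
  shows "t \<le> path_dist (LenSp X d) P Q \<longleftrightarrow> (\<forall>x\<in>P. \<forall>y\<in>Q. t \<le> d x y)"
proof -
  have ne: "{d x y | x y. x \<in> P \<and> y \<in> Q} \<noteq> {}" using assms by auto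
  have bb: "bdd_below {d x y | x y. x \<in> P \<and> y \<in> Q}"
    using assms(1,4,5) by (auto simp: bdd_below_def Metric_space_def intro!: exI[of _ 0])
  show ?thesis unfolding path_dist_def sdist.simps le_cInf_iff[OF ne bb] by blast
qed

lemma spaths_sub: "Metric_space X d \<Longrightarrow> p \<in> spaths (LenSp X d) \<Longrightarrow> snd (snd p) \<subseteq> X"
  by (auto simp: rect_curve_def continuous_map_def Metric_space.topspace_mtopology)

lemma far_lemma: assumes "Metric_space X d" "r > (0::real)"
    "far_paths (LenSp X (\<lambda>x y. (1/r) * d x y)) Q k 1"
  shows "far_paths (LenSp X d) Q k r"
proof -
  have ms': "Metric_space X (\<lambda>x y. (1/r) * d x y)" using assms by (intro ms_scale) auto
  have sp: "spaths (LenSp X (\<lambda>x y. (1/r) * d x y)) = spaths (LenSp X d)"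
    using spaths_scale[OF assms(1), of "1/r"] assms(2) by simp
  obtain P where P: "\<forall>i<k. P i \<in> spaths (LenSp X d) \<and> Q (P i)"
    "\<forall>i<k. \<forall>j<k. i \<noteq> j \<longrightarrow> path_dist (LenSp X (\<lambda>x y. (1/r) * d x y)) (snd (snd (P i))) (snd (snd (P j))) \<ge> 1"
    using assms(3) unfolding far_paths_def sp by blast
  show ?thesis unfolding far_paths_def
  proof (intro exI[of _ P] conjI allI impI)
    fix i j assume ij: "i < k" "j < k" "i \<noteq> j"
    have pi: "P i \<in> spaths (LenSp X d)" "P j \<in> spaths (LenSp X d)" using P ij by auto
    note ne = spaths_ne[OF pi(1)] spaths_ne[OF pi(2)]
    note sub = spaths_sub[OF assms(1) pi(1)] spaths_sub[OF assms(1) pi(2)]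
    have "\<forall>x\<in>snd (snd (P i)). \<forall>y\<in>snd (snd (P j)). 1 \<le> (1/r) * d x y"
      using P(2) ij pd_ge[OF ms' ne sub] by blast
    then have "\<forall>x\<in>snd (snd (P i)). \<forall>y\<in>snd (snd (P j)). r \<le> d x y"
      using assms(2) by (auto simp: field_simps)
    then show "r \<le> path_dist (LenSp X d) (snd (snd (P i))) (snd (snd (P j)))"
      using pd_ge[OF assms(1) ne sub] by blast
  qed (use P in auto)
qed

lemma hit_lemma: assumes "Metric_space X d" "r > (0::real)"
    "hitting_set (LenSp X (\<lambda>x y. (1/r) * d x y)) Q \<alpha> \<beta>"
  shows "hitting_set (LenSp X d) Q \<alpha> (\<beta> * r)"
proof -
  have sp: "spaths (LenSp X (\<lambda>x y. (1/r) * d x y)) = spaths (LenSp X d)"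
    using spaths_scale[OF assms(1), of "1/r"] assms(2) by simp
  obtain S C \<rho> where S: "S \<subseteq> X" "finite C" "C \<subseteq> X" "real (card C) \<le> \<alpha>"
    "\<forall>c\<in>C. \<rho> c \<le> \<beta>" "S \<subseteq> (\<Union>c\<in>C. {y \<in> X. (1/r) * d c y \<le> \<rho> c})"
    "\<forall>p\<in>spaths (LenSp X d). Q p \<longrightarrow> S \<inter> snd (snd p) \<noteq> {}"
    using assms(3) unfolding hitting_set_def centered_def sp spc.simps sdist.simps by blast
  have "(\<Union>c\<in>C. {y \<in> X. (1/r) * d c y \<le> \<rho> c}) = (\<Union>c\<in>C. {y \<in> X. d c y \<le> r * \<rho> c})"
    using assms(2) by (auto simp: field_simps mult.commute)
  moreover have "\<forall>c\<in>C. r * \<rho> c \<le> \<beta> * r" using S(5) assms(2) by (auto simp: mult.commute)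
  ultimately show ?thesis unfolding hitting_set_def centered_def
    using S by (intro exI[of _ S] conjI exI[of _ C] exI[of _ "\<lambda>c. r * \<rho> c"]) auto
qed

lemma remote_eq: assumes "r > (0::real)"
  shows "remote_path (LenSp X (\<lambda>x y. (1/r) * d x y)) (l / r) A B = remote_path (LenSp X d) l A B"
  using assms by (auto simp: remote_path_def fun_eq_iff field_simps)

theorem lemma9p5:
  fixes F :: "'a space set"
    and f1 g1 f2 g2 :: "nat \<Rightarrow> real \<Rightarrow> real"
    and f3 g3 :: "nat \<Rightarrow> real \<Rightarrow> real \<Rightarrow> real"
  assumes "\<forall>M\<in>F. valid_space M"
    and "scaling_closed F"
  shows "((\<forall>M\<in>F. weak_coarse_menger M f1 g1) \<longrightarrow>
           (\<forall>X d. LenSp X d \<in> F \<longrightarrow>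
              weak_coarse_menger (LenSp X d) (\<lambda>k r. f1 k 1) (\<lambda>k r. g1 k 1 * r)))
       \<and> ((\<forall>M\<in>F. weak_coarse_gallai M f2 g2) \<longrightarrow>
           (\<forall>X d. LenSp X d \<in> F \<longrightarrow>
              weak_coarse_gallai (LenSp X d) (\<lambda>k r. f2 k 1) (\<lambda>k r. g2 k 1 * r)))
       \<and> ((\<forall>M\<in>F. remote_weak_coarse_menger M f3 g3) \<longrightarrow>
           (\<forall>X d. LenSp X d \<in> F \<longrightarrow>
              remote_weak_coarse_menger (LenSp X d) (\<lambda>k r l. f3 k 1 (l / r)) (\<lambda>k r l. g3 k 1 (l / r) * r)))"
proof -
  have key: "Metric_space X d \<and> LenSp X (\<lambda>x y. (1/r) * d x y) \<in> F"
    if "LenSp X d \<in> F" "r > 0" for X d and r :: real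
  proof
    show "Metric_space X d" using assms(1) that(1) by (auto simp: length_space_def)
    have sc: "\<forall>M\<in>F. \<forall>r>0. scale r M \<in> F" using assms(2) unfolding scaling_closed_def .
    have "1/r > 0" using that(2) by simp
    then have "scale (1/r) (LenSp X d) \<in> F" using sc that(1) by blast
    then show "LenSp X (\<lambda>x y. (1/r) * d x y) \<in> F" unfolding scale.simps .
  qed
  show ?thesis
  proof (intro conjI impI allI)
    fix X d assume H: "\<forall>M\<in>F. weak_coarse_menger M f1 g1" and XF: "LenSp X d \<in> F"
    show "weak_coarse_menger (LenSp X d) (\<lambda>k r. f1 k 1) (\<lambda>k r. g1 k 1 * r)"
      unfolding weak_coarse_menger_def
    proof (intro allI impI)
      fix k r A B assume r: "(r::real) > 0" and AB: "A \<subseteq> spc (LenSp X d)" "B \<subseteq> spc (LenSp X d)"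
      from key[OF XF r] have ms: "Metric_space X d" and M': "LenSp X (\<lambda>x y. (1/r) * d x y) \<in> F" by auto
      have "far_paths (LenSp X (\<lambda>x y. (1/r) * d x y)) (path_from_to A B) k 1 \<or>
            hitting_set (LenSp X (\<lambda>x y. (1/r) * d x y)) (path_from_to A B) (f1 k 1) (g1 k 1)"
        using H M' AB unfolding weak_coarse_menger_def by auto
      then show "far_paths (LenSp X d) (path_from_to A B) k r \<or>
          hitting_set (LenSp X d) (path_from_to A B) (f1 k 1) (g1 k 1 * r)"
        using far_lemma[OF ms r] hit_lemma[OF ms r] by blast
    qed
  next
    fix X d assume H: "\<forall>M\<in>F. weak_coarse_gallai M f2 g2" and XF: "LenSp X d \<in> F"
    show "weak_coarse_gallai (LenSp X d) (\<lambda>k r. f2 k 1) (\<lambda>k r. g2 k 1 * r)"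
      unfolding weak_coarse_gallai_def
    proof (intro allI impI)
      fix k r A assume r: "(r::real) > 0" and AB: "A \<subseteq> spc (LenSp X d)"
      from key[OF XF r] have ms: "Metric_space X d" and M': "LenSp X (\<lambda>x y. (1/r) * d x y) \<in> F" by auto
      have "far_paths (LenSp X (\<lambda>x y. (1/r) * d x y)) (A_path A) k 1 \<or>
            hitting_set (LenSp X (\<lambda>x y. (1/r) * d x y)) (A_path A) (f2 k 1) (g2 k 1)"
        using H M' AB unfolding weak_coarse_gallai_def by auto
      then show "far_paths (LenSp X d) (A_path A) k r \<or>
          hitting_set (LenSp X d) (A_path A) (f2 k 1) (g2 k 1 * r)"
        using far_lemma[OF ms r] hit_lemma[OF ms r] by blast
    qed
  next
    fix X d assume H: "\<forall>M\<in>F. remote_weak_coarse_menger M f3 g3" and XF: "LenSp X d \<in> F"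
    show "remote_weak_coarse_menger (LenSp X d) (\<lambda>k r l. f3 k 1 (l / r)) (\<lambda>k r l. g3 k 1 (l / r) * r)"
      unfolding remote_weak_coarse_menger_def
    proof (intro allI impI)
      fix k r l A B assume r: "(r::real) > 0" and l: "(l::real) \<ge> 0"
        and AB: "A \<subseteq> spc (LenSp X d)" "B \<subseteq> spc (LenSp X d)"
      from key[OF XF r] have ms: "Metric_space X d" and M': "LenSp X (\<lambda>x y. (1/r) * d x y) \<in> F" by auto
      have l': "l / r \<ge> 0" using l r by simp
      have "far_paths (LenSp X (\<lambda>x y. (1/r) * d x y)) (remote_path (LenSp X (\<lambda>x y. (1/r) * d x y)) (l/r) A B) k 1 \<or>
            hitting_set (LenSp X (\<lambda>x y. (1/r) * d x y)) (remote_path (LenSp X (\<lambda>x y. (1/r) * d x y)) (l/r) A B) (f3 k 1 (l/r)) (g3 k 1 (l/r))"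
        using H M' AB l' unfolding remote_weak_coarse_menger_def by auto
      then have "far_paths (LenSp X (\<lambda>x y. (1/r) * d x y)) (remote_path (LenSp X d) l A B) k 1 \<or>
            hitting_set (LenSp X (\<lambda>x y. (1/r) * d x y)) (remote_path (LenSp X d) l A B) (f3 k 1 (l/r)) (g3 k 1 (l/r))"
        unfolding remote_eq[OF r] .
      then show "far_paths (LenSp X d) (remote_path (LenSp X d) l A B) k r \<or>
          hitting_set (LenSp X d) (remote_path (LenSp X d) l A B) (f3 k 1 (l / r)) (g3 k 1 (l / r) * r)"
        using far_lemma[OF ms r] hit_lemma[OF ms r] by blast
    qed
  qed
qed

end
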